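(* For every prime $p$ and every integer $t\ge 1$, \[ \overline{M}(p^t)=\sum_{j=1}^{p^t} f\!\left(\left\lfloor \frac{p^t}{j}\right\rfloor\right)-\sum_{j=1}^{p^{t-1}} f\!\left(\left\lfloor \frac{p^{t-1}}{j}\right\rfloor\right)+(p-1)\sum_{s=1}^{t}p^{s-1}\sum_{m=1}^{p^{t-s}} f\!\left(\left\lfloor \frac{p^t}{1+(m-1)p^s}\right\rfloor\right). \]
   Context: For a nonempty finite set $A$ of positive integers, $(A)$ denotes the greatest common divisor of the elements of $A$. For $m\in\mathbb{N}$, $f(m)$ is the number of nonempty subsets $A\subseteq\{1,2,\ldots,m\}$ with $(A)=1$. For $n\in\mathbb{N}$, \[ \overline{M}(n)=\sum_{\substack{\emptyset\ne A\subseteq\{1,\ldots,n\}\\ \gcd((A),n)=1}}\gcd((A)-1,n), \] with the convention $\gcd(0,n)=n$. *)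

theory Defs
  imports "HOL-Computational_Algebra.Primes"
begin

definition f :: "nat \<Rightarrow> nat" where
  "f m = card {A. A \<subseteq> {1..m} \<and> A \<noteq> {} \<and> Gcd A = 1}"

definition Mbar :: "nat \<Rightarrow> nat" where
  "Mbar n = (\<Sum>A\<in>{A. A \<subseteq> {1..n} \<and> A \<noteq> {} \<and> coprime (Gcd A) n}. gcd (Gcd A - 1) n)"

end

theory Submission
  imports Defs
begin

lemma card_Td:
  fixes n d :: nat
  assumes d: "d \<ge> 1"
  shows "card {A. A \<subseteq> {1..n} \<and> A \<noteq> {} \<and> Gcd A = d} = f (n div d)"
proof -
  let ?F = "{B. B \<subseteq> {1..n div d} \<and> B \<noteq> {} \<and> Gcd B = 1}"
  let ?g = "\<lambda>B::nat set. (*) d ` B"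
  have inj: "inj_on ?g ?F"
    by (rule inj_onI) (use d in \<open>auto simp: inj_image_eq_iff inj_def\<close>)
  have eq: "{A. A \<subseteq> {1..n} \<and> A \<noteq> {} \<and> Gcd A = d} = ?g ` ?F"
  proof (rule set_eqI, rule iffI)
    fix A assume "A \<in> {A. A \<subseteq> {1..n} \<and> A \<noteq> {} \<and> Gcd A = d}"
    hence A: "A \<subseteq> {1..n}" "A \<noteq> {}" "Gcd A = d" by auto
    define B where "B = (\<lambda>a. a div d) ` A"
    have dv: "\<And>a. a \<in> A \<Longrightarrow> d dvd a" using A(3) Gcd_dvd by blast
    have AB: "A = ?g B" unfolding B_def image_image
      using dv by (auto simp: image_iff intro!: bexI)
    have "B \<subseteq> {1..n div d}"
    proof
      fix b assume "b \<in> B"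
      then obtain a where a: "a \<in> A" "b = a div d" unfolding B_def by auto
      have "a \<ge> 1" "a \<le> n" using a A(1) by auto
      moreover have "d dvd a" using dv a by auto
      ultimately show "b \<in> {1..n div d}" using a d
        by (auto simp: div_le_mono elim!: dvdE)
    qed
    moreover have "B \<noteq> {}" using A(2) B_def by auto
    moreover have "Gcd B = 1"
    proof -
      have "d * Gcd B = d" using A(3) AB Gcd_mult[of d B] by simp
      thus ?thesis using d by simp
    qed
    ultimately show "A \<in> ?g ` ?F" using AB by blast
  next
    fix A assume "A \<in> ?g ` ?F"
    then obtain B where B: "B \<subseteq> {1..n div d}" "B \<noteq> {}" "Gcd B = 1" and AB: "A = ?g B" by auto
    have "A \<subseteq> {1..n}"
    proof
      fix a assume "a \<in> A"
      then obtain b where b: "b \<in> B" "a = d * b" using AB by auto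
      have "d * b \<le> d * (n div d)" using b B(1) by auto
      also have "\<dots> \<le> n" by simp
      finally show "a \<in> {1..n}" using b B(1) d by auto
    qed
    moreover have "Gcd A = d" using AB B(3) Gcd_mult[of d B] by simp
    ultimately show "A \<in> {A. A \<subseteq> {1..n} \<and> A \<noteq> {} \<and> Gcd A = d}" using B(2) AB by auto
  qed
  show ?thesis unfolding eq f_def by (rule card_image[OF inj])
qed

lemma Mbar_sum:
  fixes n :: nat
  shows "Mbar n = (\<Sum>d\<in>{d\<in>{1..n}. coprime d n}. f (n div d) * gcd (d - 1) n)"
proof -
  let ?S = "{A. A \<subseteq> {1..n} \<and> A \<noteq> {} \<and> coprime (Gcd A) n}"
  let ?D = "{d\<in>{1..n}. coprime d n}"
  have fS: "finite ?S"
    by (rule finite_subset[of _ "Pow {1..n}"]) auto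
  have img: "Gcd ` ?S \<subseteq> ?D"
  proof
    fix x assume "x \<in> Gcd ` ?S"
    then obtain A where A: "A \<subseteq> {1..n}" "A \<noteq> {}" "coprime (Gcd A) n" "x = Gcd A" by auto
    obtain a where a: "a \<in> A" using A(2) by auto
    have "Gcd A dvd a" using a by (rule Gcd_dvd)
    moreover have "a \<ge> 1" "a \<le> n" using a A(1) by auto
    ultimately have "Gcd A \<ge> 1" "Gcd A \<le> n"
      by (auto intro: Nat.gr0I dest: dvd_0_left) (metis dvd_imp_le le_trans less_eq_Suc_le zero_less_Suc le_less_trans)
    thus "x \<in> ?D" using A by auto
  qed
  have "Mbar n = (\<Sum>d\<in>?D. \<Sum>A\<in>{A. A \<in> ?S \<and> Gcd A = d}. gcd (Gcd A - 1) n)"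
    unfolding Mbar_def by (rule sum.group[OF fS _ img, symmetric]) simp
  also have "\<dots> = (\<Sum>d\<in>?D. f (n div d) * gcd (d - 1) n)"
  proof (rule sum.cong[OF refl])
    fix d assume d: "d \<in> ?D"
    have e: "{A. A \<in> ?S \<and> Gcd A = d} = {A. A \<subseteq> {1..n} \<and> A \<noteq> {} \<and> Gcd A = d}"
      using d by auto
    have "(\<Sum>A\<in>{A. A \<in> ?S \<and> Gcd A = d}. gcd (Gcd A - 1) n)
        = (\<Sum>A\<in>{A. A \<in> ?S \<and> Gcd A = d}. gcd (d - 1) n)"
      by (rule sum.cong) auto
    also have "\<dots> = card {A. A \<subseteq> {1..n} \<and> A \<noteq> {} \<and> Gcd A = d} * gcd (d - 1) n"
      unfolding e by simp
    also have "\<dots> = f (n div d) * gcd (d - 1) n" using d card_Td[of d n] by simp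
    finally show "(\<Sum>A\<in>{A. A \<in> ?S \<and> Gcd A = d}. gcd (Gcd A - 1) n) = f (n div d) * gcd (d - 1) n" .
  qed
  finally show ?thesis .
qed

lemma gcd_primepow_step:
  fixes p x t :: nat
  assumes p: "prime p" and nd: "\<not> p ^ Suc t dvd x"
  shows "gcd x (p ^ Suc t) = gcd x (p ^ t)"
proof -
  have "gcd x (p ^ Suc t) dvd p ^ Suc t" by (rule gcd_dvd2)
  then obtain i where i: "i \<le> Suc t" "gcd x (p ^ Suc t) = p ^ i"
    using divides_primepow_nat[OF p] by blast
  have "i \<noteq> Suc t"
  proof
    assume "i = Suc t"
    hence "p ^ Suc t dvd x" using i(2) gcd_dvd1[of x "p ^ Suc t"] by simp
    thus False using nd by contradiction
  qed
  hence "i \<le> t" using i by simp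
  hence "p ^ i dvd p ^ t" by (rule le_imp_power_dvd)
  hence a: "gcd x (p ^ Suc t) dvd gcd x (p ^ t)" using i(2) gcd_dvd1[of x "p ^ Suc t"]
    by (intro gcd_greatest) simp_all
  have "p ^ t dvd p ^ Suc t" by (rule le_imp_power_dvd) simp
  hence b: "gcd x (p ^ t) dvd gcd x (p ^ Suc t)"
    by (intro gcd_greatest gcd_dvd1 dvd_trans[OF gcd_dvd2])
  show ?thesis using a b by (rule dvd_antisym)
qed

lemma gcd_primepow_sum:
  fixes p x t :: nat
  assumes p: "prime p"
  shows "gcd x (p ^ t) = 1 + (p - 1) * (\<Sum>s=1..t. if p ^ s dvd x then p ^ (s - 1) else 0)"
proof (induction t)
  case 0
  then show ?case by simp
next
  case (Suc t)
  have p1: "p \<ge> 1" using p prime_ge_1_nat by blast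
  show ?case
  proof (cases "p ^ Suc t dvd x")
    case True
    have "p ^ t dvd x" using True by (metis dvd_mult_left power_Suc2)
    hence g: "gcd x (p ^ t) = p ^ t" by (simp add: gcd_nat.absorb2)
    have gS: "gcd x (p ^ Suc t) = p ^ Suc t" using True by (simp add: gcd_nat.absorb2)
    have "(\<Sum>s=1..Suc t. if p ^ s dvd x then p ^ (s - 1) else 0)
        = (\<Sum>s=1..t. if p ^ s dvd x then p ^ (s - 1) else 0) + p ^ t"
      using True by simp
    moreover have "p ^ t = 1 + (p - 1) * (\<Sum>s=1..t. if p ^ s dvd x then p ^ (s - 1) else 0)"
      using Suc.IH g by simp
    ultimately have "1 + (p - 1) * (\<Sum>s=1..Suc t. if p ^ s dvd x then p ^ (s - 1) else 0)
        = p ^ t + (p - 1) * p ^ t"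
      by (simp only: distrib_left add.assoc[symmetric])
    also have "\<dots> = (1 + (p - 1)) * p ^ t" by (simp only: distrib_right mult_1)
    also have "\<dots> = p ^ Suc t" using p1 by simp
    finally show ?thesis using gS by simp
  next
    case False
    have "gcd x (p ^ Suc t) = gcd x (p ^ t)" using gcd_primepow_step[OF p False] .
    moreover have "(\<Sum>s=1..Suc t. if p ^ s dvd x then p ^ (s - 1) else 0)
        = (\<Sum>s=1..t. if p ^ s dvd x then p ^ (s - 1) else 0)"
      using False by simp
    ultimately show ?thesis using Suc.IH by simp
  qed
qed

lemma D_eq:
  fixes p t :: nat
  assumes p: "prime p" and t: "t \<ge> 1"
  shows "{d\<in>{1..p^t}. coprime d (p^t)} = {d\<in>{1..p^t}. \<not> p dvd d}"
proof -
  have "coprime d (p^t) \<longleftrightarrow> \<not> p dvd d" for d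
  proof -
    have "coprime d (p^t) \<longleftrightarrow> coprime d p" using t by simp
    also have "\<dots> \<longleftrightarrow> \<not> p dvd d"
    proof
      assume c: "coprime d p"
      show "\<not> p dvd d"
      proof
        assume "p dvd d"
        hence "is_unit p" using coprime_common_divisor[OF c _ dvd_refl] by blast
        thus False using p not_prime_unit by blast
      qed
    next
      assume "\<not> p dvd d"
      hence "coprime p d" by (rule prime_imp_coprime[OF p])
      thus "coprime d p" by (simp only: coprime_commute)
    qed
    finally show ?thesis .
  qed
  thus ?thesis by (intro Collect_cong) blast
qed

lemma filt_eq:
  fixes p t s :: nat
  assumes p: "prime p" and s: "1 \<le> s" "s \<le> t"
  shows "{d\<in>{1..p^t}. \<not> p dvd d \<and> p^s dvd (d - 1)} = (\<lambda>m. 1 + (m - 1) * p^s) ` {1..p^(t-s)}"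
proof -
  have p1: "p > 1" using p prime_gt_1_nat by blast
  have pt: "p^t = p^(t-s) * p^s" using s by (simp add: power_add[symmetric])
  have ps: "p^s > 0" using p1 by simp
  have pd: "p dvd p^s" using s by (simp add: dvd_power)
  show ?thesis
  proof (rule set_eqI, rule iffI)
    fix d assume "d \<in> {d\<in>{1..p^t}. \<not> p dvd d \<and> p^s dvd (d - 1)}"
    hence d: "1 \<le> d" "d \<le> p^t" "p^s dvd (d - 1)" by auto
    then obtain k where k: "d - 1 = p^s * k" by (elim dvdE)
    have dk: "d = 1 + k * p^s" using k d(1) by (metis add.commute le_add_diff_inverse mult.commute)
    have "k * p^s < p^(t-s) * p^s" using dk d(2) pt by linarith
    hence "k < p^(t-s)" using mult_less_cancel2 by blast
    hence "Suc k \<in> {1..p^(t-s)}" by simp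
    moreover have "d = 1 + (Suc k - 1) * p^s" using dk by simp
    ultimately show "d \<in> (\<lambda>m. 1 + (m - 1) * p^s) ` {1..p^(t-s)}" by blast
  next
    fix d assume "d \<in> (\<lambda>m. 1 + (m - 1) * p^s) ` {1..p^(t-s)}"
    then obtain m where m: "1 \<le> m" "m \<le> p^(t-s)" and dm: "d = 1 + (m - 1) * p^s" by auto
    have "m - 1 < p^(t-s)" using m by simp
    hence "(m - 1) * p^s < p^(t-s) * p^s" using ps mult_less_cancel2 by blast
    hence "d \<le> p^t" using dm pt by linarith
    moreover have "\<not> p dvd d"
    proof
      assume "p dvd d"
      moreover have "p dvd (m - 1) * p^s" using pd by simp
      ultimately have "p dvd 1" using dm by (metis add.commute dvd_add_right_iff)
      thus False using p1 by simp
    qed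
    moreover have "p^s dvd (d - 1)" using dm by simp
    moreover have "1 \<le> d" using dm by simp
    ultimately show "d \<in> {d\<in>{1..p^t}. \<not> p dvd d \<and> p^s dvd (d - 1)}"
      unfolding mem_Collect_eq atLeastAtMost_iff by blast
  qed
qed

lemma mult_eq:
  fixes p t :: nat
  assumes p: "prime p" and t: "t \<ge> 1"
  shows "{d\<in>{1..p^t}. p dvd d} = (\<lambda>k. p * k) ` {1..p^(t-1)}"
proof -
  have p1: "p > 1" using p prime_gt_1_nat by blast
  have pt: "p^t = p * p^(t-1)" using t by (simp add: power_eq_if)
  show ?thesis
  proof (rule set_eqI, rule iffI)
    fix d assume "d \<in> {d\<in>{1..p^t}. p dvd d}"
    hence d: "1 \<le> d" "d \<le> p^t" "p dvd d" by auto
    then obtain k where k: "d = p * k" by (elim dvdE)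
    have "k \<ge> 1" using d(1) k by (cases k) auto
    moreover have "k \<le> p^(t-1)" using d(2) k pt p1 by simp
    ultimately show "d \<in> (\<lambda>k. p * k) ` {1..p^(t-1)}" using k by auto
  next
    fix d assume "d \<in> (\<lambda>k. p * k) ` {1..p^(t-1)}"
    then obtain k where k: "1 \<le> k" "k \<le> p^(t-1)" "d = p * k" by auto
    have "d \<le> p^t" using k pt by simp
    moreover have "d \<ge> 1" using k p1 by simp
    ultimately show "d \<in> {d\<in>{1..p^t}. p dvd d}" using k by auto
  qed
qed

theorem mainTheorem3:
  fixes p t :: nat
  assumes "prime p" and "t \<ge> 1"
  shows "int (Mbar (p ^ t)) =
    int (\<Sum>j=1..p ^ t. f (p ^ t div j))
    - int (\<Sum>j=1..p ^ (t - 1). f (p ^ (t - 1) div j))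
    + int ((p - 1) * (\<Sum>s=1..t. p ^ (s - 1) * (\<Sum>m=1..p ^ (t - s). f (p ^ t div (1 + (m - 1) * p ^ s)))))"
proof -
  note p = assms(1) and t = assms(2)
  have p1: "p > 1" using p prime_gt_1_nat by blast
  define D where "D = {d\<in>{1..p^t}. \<not> p dvd d}"
  define E where "E = {d\<in>{1..p^t}. p dvd d}"
  define g where "g s d = (if p^s dvd (d - 1) then p^(s-1) else (0::nat))" for s d :: nat
  define F where "F d = f (p^t div d)" for d
  have fD: "finite D" unfolding D_def by simp
  have fE: "finite E" unfolding E_def by simp
  have "Mbar (p^t) = (\<Sum>d\<in>D. F d * gcd (d - 1) (p^t))"
    unfolding D_def F_def using Mbar_sum[of "p^t"] D_eq[OF p t] by simp
  also have "\<dots> = (\<Sum>d\<in>D. F d * (1 + (p - 1) * (\<Sum>s=1..t. g s d)))"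
    by (rule sum.cong[OF refl]) (simp only: gcd_primepow_sum[OF p] g_def)
  also have "\<dots> = (\<Sum>d\<in>D. F d + (p - 1) * (\<Sum>s=1..t. F d * g s d))"
    by (rule sum.cong[OF refl]) (simp only: distrib_left mult_1_right sum_distrib_left mult.left_commute)
  also have "\<dots> = (\<Sum>d\<in>D. F d) + (p - 1) * (\<Sum>d\<in>D. \<Sum>s=1..t. F d * g s d)"
    by (simp only: sum.distrib sum_distrib_left)
  also have "(\<Sum>d\<in>D. \<Sum>s=1..t. F d * g s d) = (\<Sum>s=1..t. \<Sum>d\<in>D. F d * g s d)"
    by (rule sum.swap)
  also have "\<dots> = (\<Sum>s=1..t. p ^ (s - 1) * (\<Sum>m=1..p ^ (t - s). f (p ^ t div (1 + (m - 1) * p ^ s))))"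
  proof (rule sum.cong[OF refl])
    fix s assume s: "s \<in> {1..t}"
    have ps: "p^s > 0" using p1 by simp
    have "(\<Sum>d\<in>D. F d * g s d) = (\<Sum>d\<in>D. if p^s dvd (d - 1) then p^(s-1) * F d else 0)"
      by (rule sum.cong[OF refl]) (simp add: g_def)
    also have "\<dots> = (\<Sum>d\<in>{d\<in>D. p^s dvd (d - 1)}. p^(s-1) * F d)"
      by (rule sum.inter_filter[OF fD, symmetric])
    also have "\<dots> = p^(s-1) * (\<Sum>d\<in>{d\<in>D. p^s dvd (d - 1)}. F d)"
      by (rule sum_distrib_left[symmetric])
    also have "{d\<in>D. p^s dvd (d - 1)} = (\<lambda>m. 1 + (m - 1) * p^s) ` {1..p^(t-s)}"
    proof -
      have "{d\<in>D. p^s dvd (d - 1)} = {d\<in>{1..p^t}. \<not> p dvd d \<and> p^s dvd (d - 1)}"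
        unfolding D_def by blast
      also have "\<dots> = (\<lambda>m. 1 + (m - 1) * p^s) ` {1..p^(t-s)}"
        using filt_eq[OF p] s by simp
      finally show ?thesis .
    qed
    also have "(\<Sum>d\<in>(\<lambda>m. 1 + (m - 1) * p^s) ` {1..p^(t-s)}. F d)
        = (\<Sum>m=1..p ^ (t - s). F (1 + (m - 1) * p ^ s))"
    proof (rule sum.reindex_cong[OF _ refl refl])
      show "inj_on (\<lambda>m. 1 + (m - 1) * p^s) {1..p^(t-s)}"
      proof (rule inj_onI)
        fix a b assume a: "a \<in> {1..p^(t-s)}" and b: "b \<in> {1..p^(t-s)}"
          and e: "1 + (a - 1) * p^s = 1 + (b - 1) * p^s"
        hence "(a - 1) * p^s = (b - 1) * p^s" using e by linarith
        hence "a - 1 = b - 1" using ps by (metis mult_right_cancel not_less0 gr_zeroI)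
        moreover have "a \<ge> 1" "b \<ge> 1" using a b by auto
        ultimately show "a = b" by linarith
      qed
    qed
    finally show "(\<Sum>d\<in>D. F d * g s d) = p ^ (s - 1) * (\<Sum>m=1..p ^ (t - s). f (p ^ t div (1 + (m - 1) * p ^ s)))"
      unfolding F_def .
  qed
  finally have M: "Mbar (p^t) = (\<Sum>d\<in>D. F d) + (p - 1) * (\<Sum>s=1..t. p ^ (s - 1) * (\<Sum>m=1..p ^ (t - s). f (p ^ t div (1 + (m - 1) * p ^ s))))" .
  have U: "{1..p^t} = D \<union> E" unfolding D_def E_def by blast
  have I: "D \<inter> E = {}" unfolding D_def E_def by blast
  have A: "(\<Sum>j=1..p ^ t. f (p ^ t div j)) = (\<Sum>d\<in>D. F d) + (\<Sum>d\<in>E. F d)"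
    unfolding U F_def by (rule sum.union_disjoint[OF fD fE I])
  have "(\<Sum>d\<in>E. F d) = (\<Sum>k=1..p^(t-1). F (p * k))"
    unfolding E_def mult_eq[OF p t]
    by (rule sum.reindex_cong[OF _ refl refl]) (use p1 in \<open>auto simp: inj_on_def\<close>)
  also have "\<dots> = (\<Sum>k=1..p^(t-1). f (p^(t-1) div k))"
  proof (rule sum.cong[OF refl])
    fix k
    have "p^t = p * p^(t-1)" using t by (simp add: power_eq_if)
    hence "p^t div (p * k) = p^(t-1) div k" using p1 by (simp add: div_mult2_eq)
    thus "F (p * k) = f (p^(t-1) div k)" unfolding F_def by simp
  qed
  finally have B: "(\<Sum>d\<in>E. F d) = (\<Sum>k=1..p^(t-1). f (p^(t-1) div k))" .
  show ?thesis unfolding M using A B by simp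
qed

end
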